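(* Assume linear utilities and that $X \triangleq \phi(X_1)-\phi(X_2) \sim \mathcal{N}(0,\Sigma)$ with $\Sigma$ positive definite, independent of the user parameter $\beta$, where $\mathbb{E}\|\beta\|<\infty$. Let $\hat\beta^{\mathrm{RLHF}}\in\mathbb{R}^d$ be any solution of the population first-order (moment) equation of the RLHF cross-entropy objective, $$\mathbb{E}_X\big[\sigma(X^\top\hat\beta^{\mathrm{RLHF}})X\big]=\mathbb{E}_X\Big[\mathbb{E}_\beta\big[\sigma(X^\top\beta)\big]X\Big].$$ Then $$\hat\beta^{\mathrm{RLHF}} = c\,\mathbb{E}_\beta\Big[\mathbb{E}_X\big[\sigma'(X^\top\beta)\big]\,\beta\Big],\qquad c=\frac{1}{\mathbb{E}_X[\sigma'(X^\top\hat\beta^{\mathrm{RLHF}})]}>0,$$ i.e. $\hat\beta^{\mathrm{RLHF}}$ is a positive multiple of the weighted mean $\mathbb{E}_\beta[w(\beta)\beta]$ with weights $w(\beta)=\mathbb{E}_X[\sigma'(X^\top\beta)]$. *)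

theory Defs
  imports "HOL-Probability.Probability"
begin

definition sigmoid :: "real \<Rightarrow> real" where
  "sigmoid t = 1 / (1 + exp (- t))"

definition pos_def_mat :: "real ^'n ^'n \<Rightarrow> bool" where
  "pos_def_mat S \<longleftrightarrow> transpose S = S \<and> (\<forall>x. x \<noteq> 0 \<longrightarrow> x \<bullet> (S *v x) > 0)"

definition gauss_pdf :: "real ^'n ^'n \<Rightarrow> real ^'n \<Rightarrow> real" where
  "gauss_pdf S x = exp (- (x \<bullet> (matrix_inv S *v x)) / 2)
                    / sqrt ((2 * pi) ^ CARD('n) * det S)"

definition gaussian_vec :: "real ^'n ^'n \<Rightarrow> (real ^'n) measure" where
  "gaussian_vec S = density lborel (\<lambda>x. ennreal (gauss_pdf S x))"

end

theory Submission
  imports Defs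
begin


lemma one_exp_pos [simp]: "0 < 1 + exp (- t::real)"
  by (smt (verit) exp_gt_zero)

lemma one_exp_ne [simp]: "1 + exp (- t::real) \<noteq> 0"
  by (smt (verit) exp_gt_zero)

lemma one_exp_nlt [simp]: "\<not> 1 + exp (- t::real) < 0"
  by (smt (verit) exp_gt_zero)

lemma sigmoid_pos: "sigmoid t > 0"
  unfolding sigmoid_def using one_exp_pos by simp

lemma sigmoid_less1: "sigmoid t < 1"
  unfolding sigmoid_def using one_exp_pos[of t] exp_gt_zero[of "-t"] by (simp add: divide_less_eq)

lemma sigmoid_deriv: "(sigmoid has_real_derivative (exp (- t) / (1 + exp (- t))^2)) (at t)"
  unfolding sigmoid_def[abs_def] using one_exp_pos[of t]
  apply -
  apply (rule derivative_eq_intros refl | simp)+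
  apply (simp add: power2_eq_square)
  done

lemma deriv_sigmoid: "deriv sigmoid t = exp (- t) / (1 + exp (- t))^2"
  using sigmoid_deriv DERIV_imp_deriv by blast

lemma deriv_sigmoid_pos: "deriv sigmoid t > 0"
  unfolding deriv_sigmoid using one_exp_pos[of t] by simp

lemma deriv_sigmoid_le1: "deriv sigmoid t \<le> 1"
proof -
  have "exp (- t) \<le> (1 + exp (- t))^2" by (simp add: power2_eq_square algebra_simps)
  then show ?thesis unfolding deriv_sigmoid using one_exp_pos[of t] by (simp add: divide_le_eq_1)
qed

lemma continuous_deriv_sigmoid: "continuous_on UNIV (deriv sigmoid)"
  unfolding deriv_sigmoid[abs_def] using one_exp_pos by (intro continuous_intros) (simp add: add_pos_pos)

lemma continuous_sigmoid: "continuous_on UNIV sigmoid"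
  unfolding sigmoid_def[abs_def] using one_exp_pos by (intro continuous_intros) simp



lemma inner_mat_sym:
  fixes A :: "real^'n^'n"
  assumes "transpose A = A"
  shows "x \<bullet> (A *v y) = (A *v x) \<bullet> y"
  by (metis assms dot_lmul_matrix transpose_matrix_vector)

lemma pd_ker: assumes "pos_def_mat S" "S *v x = 0" shows "x = 0"
  using assms unfolding pos_def_mat_def by force

lemma pd_invertible: assumes "pos_def_mat (S::real^'n^'n)" shows "invertible S"
  using pd_ker[OF assms] matrix_left_invertible_ker invertible_left_inverse by blast

lemma pd_inv:
  assumes "pos_def_mat (S::real^'n^'n)"
  shows "S ** matrix_inv S = mat 1" "matrix_inv S ** S = mat 1"
proof -
  have "\<exists>A'. S ** A' = mat 1 \<and> A' ** S = mat 1"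
    using pd_invertible[OF assms] unfolding invertible_def by blast
  then have "S ** matrix_inv S = mat 1 \<and> matrix_inv S ** S = mat 1"
    unfolding matrix_inv_def by (rule someI_ex)
  then show "S ** matrix_inv S = mat 1" "matrix_inv S ** S = mat 1" by auto
qed

lemma pd_inv_sym:
  assumes "pos_def_mat (S::real^'n^'n)"
  shows "transpose (matrix_inv S) = matrix_inv S"
proof -
  let ?P = "matrix_inv S"
  have St: "transpose S = S" using assms unfolding pos_def_mat_def by auto
  have "S ** transpose ?P = mat 1"
    using arg_cong[OF pd_inv(2)[OF assms], of transpose] by (simp add: matrix_transpose_mul St)
  then have "?P ** (S ** transpose ?P) = ?P" by simp
  then show ?thesis by (simp add: matrix_mul_assoc pd_inv(2)[OF assms])
qed

lemma pd_inv_pd: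
  assumes "pos_def_mat (S::real^'n^'n)" "x \<noteq> 0"
  shows "x \<bullet> (matrix_inv S *v x) > 0"
proof -
  let ?P = "matrix_inv S"
  define y where "y = ?P *v x"
  have xy: "x = S *v y" unfolding y_def by (simp add: matrix_vector_mul_assoc pd_inv(1)[OF assms(1)])
  have "y \<noteq> 0" using xy assms(2) by auto
  then have "y \<bullet> (S *v y) > 0" using assms(1) unfolding pos_def_mat_def by auto
  moreover have "x \<bullet> (?P *v x) = y \<bullet> (S *v y)"
  proof -
    have "x \<bullet> (?P *v x) = x \<bullet> y" by (simp add: y_def)
    also have "\<dots> = (S *v y) \<bullet> y" using xy by simp
    finally show ?thesis by (simp add: inner_commute)
  qed
  ultimately show ?thesis by simp
qed

lemma quad_lower:
  fixes P :: "real^'n^'n"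
  assumes "\<And>x. x \<noteq> 0 \<Longrightarrow> x \<bullet> (P *v x) > 0"
  obtains l where "l > 0" "\<And>x. x \<bullet> (P *v x) \<ge> l * (norm x)^2"
proof -
  have cont: "continuous_on (sphere 0 1) (\<lambda>x::real^'n. x \<bullet> (P *v x))"
    by (intro continuous_intros linear_continuous_on matrix_vector_mul_linear)
  have ne: "sphere (0::real^'n) 1 \<noteq> {}" by simp
  obtain u where u: "u \<in> sphere 0 1" "\<And>y. y \<in> sphere 0 1 \<Longrightarrow> u \<bullet> (P *v u) \<le> y \<bullet> (P *v y)"
    using continuous_attains_inf[OF compact_sphere ne cont] by blast
  have "u \<noteq> 0" using u(1) by auto
  then have lpos: "u \<bullet> (P *v u) > 0" by (rule assms)
  show ?thesis
  proof (rule that[OF lpos])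
    fix x :: "real^'n"
    show "x \<bullet> (P *v x) \<ge> (u \<bullet> (P *v u)) * (norm x)^2"
    proof (cases "x = 0")
      case True then show ?thesis by simp
    next
      case False
      define z where "z = (1 / norm x) *\<^sub>R x"
      have "z \<in> sphere 0 1" unfolding z_def using False by simp
      then have "u \<bullet> (P *v u) \<le> z \<bullet> (P *v z)" by (rule u(2))
      also have "z \<bullet> (P *v z) = (x \<bullet> (P *v x)) / (norm x)^2"
        unfolding z_def by (simp add: matrix_vector_mult_scaleR power2_eq_square)
      finally show ?thesis using False by (simp add: field_simps)
    qed
  qed
qed

lemma det_pd_pos:
  assumes "pos_def_mat (S::real^'n^'n)"
  shows "det S > 0"
proof -
  define M where "M = (\<lambda>t::real. t *\<^sub>R S + (1 - t) *\<^sub>R mat 1)"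
  have nz: "det (M t) \<noteq> 0" if "0 \<le> t" "t \<le> 1" for t
  proof -
    have "x = 0" if "M t *v x = 0" for x
    proof (rule ccontr)
      assume x: "x \<noteq> 0"
      have "x \<bullet> (M t *v x) = t * (x \<bullet> (S *v x)) + (1 - t) * (x \<bullet> x)"
        unfolding M_def by (simp add: matrix_vector_mult_add_rdistrib scaleR_matrix_vector_assoc[symmetric] inner_add_right)
      moreover have "x \<bullet> (S *v x) > 0" using assms x unfolding pos_def_mat_def by auto
      moreover have "x \<bullet> x > 0" using x by simp
      ultimately have "x \<bullet> (M t *v x) > 0" using \<open>0 \<le> t\<close> \<open>t \<le> 1\<close>
        by (smt (verit, best) mult_nonneg_nonneg mult_pos_pos)
      then show False using that by simp
    qed
    then have "invertible (M t)" using matrix_left_invertible_ker invertible_left_inverse by blast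
    then show ?thesis using invertible_det_nz by blast
  qed
  have cont: "isCont (\<lambda>t. det (M t)) t" for t
    unfolding M_def det_def by (simp add: mat_def) (intro continuous_intros)
  have "det (M 0) = 1" by (simp add: M_def)
  show ?thesis
  proof (rule ccontr)
    assume "\<not> det S > 0"
    then have "det (M 1) \<le> 0" by (simp add: M_def)
    then obtain t where "0 \<le> t" "t \<le> 1" "det (M t) = 0"
      using IVT2[of "\<lambda>t. det (M t)" 1 0 0] \<open>det (M 0) = 1\<close> cont by auto
    then show False using nz by blast
  qed
qed



lemma integrable_prod_basis:
  fixes f :: "'a::euclidean_space \<Rightarrow> real \<Rightarrow> real"
  assumes int: "\<And>b. b \<in> Basis \<Longrightarrow> integrable lborel (f b)"
    and nn: "\<And>b t. b \<in> Basis \<Longrightarrow> 0 \<le> f b t"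
  shows "integrable lborel (\<lambda>x::'a. \<Prod>b\<in>Basis. f b (x \<bullet> b))"
proof -
  have [measurable]: "f b \<in> borel_measurable borel" if "b \<in> Basis" for b
    using borel_measurable_integrable[OF int[OF that]] by simp
  have meas: "(\<lambda>x::'a. \<Prod>b\<in>Basis. f b (x \<bullet> b)) \<in> borel_measurable lborel"
    by measurable
  have fin: "(\<integral>\<^sup>+t. ennreal (f b t) \<partial>lborel) < \<infinity>" if "b \<in> Basis" for b
    using int[OF that] nn[OF that] unfolding integrable_iff_bounded by simp
  have "(\<integral>\<^sup>+x. ennreal (norm (\<Prod>b\<in>Basis. f b (x \<bullet> b))) \<partial>lborel)
      = (\<integral>\<^sup>+x. (\<Prod>b\<in>Basis. ennreal (f b (x \<bullet> b))) \<partial>lborel)"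
    using nn by (intro nn_integral_cong) (simp add: prod_ennreal prod_nonneg abs_prod)
  also have "\<dots> = (\<Prod>b\<in>Basis. (\<integral>\<^sup>+t. ennreal (f b t) \<partial>lborel))"
    by (rule nn_integral_lborel_prod) auto
  also have "\<dots> < \<infinity>"
    using fin by (simp add: less_top[symmetric] ennreal_prod_eq_top)
  finally show ?thesis using meas unfolding integrable_iff_bounded by simp
qed

lemma integrable_gauss1:
  assumes a: "a > 0"
  shows "integrable lborel (\<lambda>t::real. \<bar>t\<bar>^k * exp (- a * t\<^sup>2))"
proof -
  define c where "c = sqrt (2 * a)"
  have c: "c > 0" using a by (simp add: c_def)
  have c2: "c\<^sup>2 = 2 * a" using a by (simp add: c_def)
  have "integrable lborel (\<lambda>t. std_normal_density (0 + c * t) * \<bar>0 + c * t\<bar>^k)"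
    using lborel_integrable_real_affine[OF integrable_std_normal_moment_abs[of k], of c 0] c by simp
  then have "integrable lborel (\<lambda>t. (sqrt (2 * pi) / c ^ k) * (std_normal_density (0 + c * t) * \<bar>0 + c * t\<bar>^k))"
    by simp
  also have "(\<lambda>t. (sqrt (2 * pi) / c ^ k) * (std_normal_density (0 + c * t) * \<bar>0 + c * t\<bar>^k))
      = (\<lambda>t::real. \<bar>t\<bar>^k * exp (- a * t\<^sup>2))"
  proof
    fix t :: real
    have "exp (- (c * t)\<^sup>2 / 2) = exp (- a * t\<^sup>2)"
      by (simp add: power_mult_distrib c2)
    then show "(sqrt (2 * pi) / c ^ k) * (std_normal_density (0 + c * t) * \<bar>0 + c * t\<bar>^k) = \<bar>t\<bar>^k * exp (- a * t\<^sup>2)"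
      using c by (simp add: std_normal_density_def abs_mult power_mult_distrib field_simps)
  qed
  finally show ?thesis .
qed

lemma integrable_gauss_n:
  assumes a: "a > 0"
  shows "integrable lborel (\<lambda>x::'a::euclidean_space. (1 + norm x) * exp (- a * (norm x)\<^sup>2))"
proof -
  define g :: "'a \<Rightarrow> 'a \<Rightarrow> real \<Rightarrow> real" where
    "g j b t = (if b = j then \<bar>t\<bar> else 1) * exp (- a * t\<^sup>2)" for j b t
  define D where "D x = (\<Prod>b\<in>Basis. exp (- a * (x \<bullet> b)\<^sup>2)) + (\<Sum>j\<in>Basis. \<Prod>b\<in>Basis. g j b (x \<bullet> b))" for x
  have intD: "integrable lborel D"
    unfolding D_def
  proof (intro Bochner_Integration.integrable_add Bochner_Integration.integrable_sum)
    show "integrable lborel (\<lambda>x::'a. \<Prod>b\<in>Basis. exp (- a * (x \<bullet> b)\<^sup>2))"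
      using integrable_prod_basis[of "\<lambda>b t. exp (- a * t\<^sup>2)"] integrable_gauss1[OF a, of 0] by simp
    fix j :: 'a assume "j \<in> Basis"
    show "integrable lborel (\<lambda>x::'a. \<Prod>b\<in>Basis. g j b (x \<bullet> b))"
    proof (rule integrable_prod_basis)
      fix b :: 'a assume "b \<in> Basis"
      show "integrable lborel (g j b)"
        unfolding g_def using integrable_gauss1[OF a, of 0] integrable_gauss1[OF a, of 1]
        by (cases "b = j") simp_all
      show "0 \<le> g j b t" for t unfolding g_def by simp
    qed
  qed
  have E: "exp (- a * (norm x)\<^sup>2) = (\<Prod>b\<in>Basis. exp (- a * (x \<bullet> b)\<^sup>2))" for x :: 'a
  proof -
    have "(norm x)\<^sup>2 = (\<Sum>b\<in>Basis. (x \<bullet> b)\<^sup>2)"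
      by (subst power2_norm_eq_inner, subst euclidean_inner) (simp add: power2_eq_square)
    then show ?thesis by (simp add: sum_distrib_left exp_sum)
  qed
  have G: "(\<Prod>b\<in>Basis. g j b (x \<bullet> b)) = \<bar>x \<bullet> j\<bar> * (\<Prod>b\<in>Basis. exp (- a * (x \<bullet> b)\<^sup>2))"
    if "j \<in> Basis" for j x
  proof -
    have "(\<Prod>b\<in>Basis. g j b (x \<bullet> b)) = (\<Prod>b\<in>Basis. (if b = j then \<bar>x \<bullet> b\<bar> else 1)) * (\<Prod>b\<in>Basis. exp (- a * (x \<bullet> b)\<^sup>2))"
      unfolding g_def prod.distrib by simp
    also have "(\<Prod>b\<in>Basis. (if b = j then \<bar>x \<bullet> b\<bar> else 1)) = \<bar>x \<bullet> j\<bar>"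
      using that by (simp add: prod.delta)
    finally show ?thesis .
  qed
  show ?thesis
  proof (rule Bochner_Integration.integrable_bound[OF intD])
    show "(\<lambda>x::'a. (1 + norm x) * exp (- a * (norm x)\<^sup>2)) \<in> borel_measurable lborel" by measurable
    show "AE x in lborel. norm ((1 + norm x) * exp (- a * (norm x)\<^sup>2)) \<le> norm (D x)"
    proof (rule AE_I2)
      fix x :: 'a
      have "D x = (1 + (\<Sum>j\<in>Basis. \<bar>x \<bullet> j\<bar>)) * exp (- a * (norm x)\<^sup>2)"
        unfolding D_def E using G by (simp add: sum_distrib_right algebra_simps)
      moreover have "D x \<ge> 0" unfolding D_def g_def by (intro add_nonneg_nonneg sum_nonneg prod_nonneg) auto
      moreover have "(1 + norm x) * exp (- a * (norm x)\<^sup>2) \<le> (1 + (\<Sum>j\<in>Basis. \<bar>x \<bullet> j\<bar>)) * exp (- a * (norm x)\<^sup>2)"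
        using norm_le_l1[of x] by (intro mult_right_mono) auto
      ultimately show "norm ((1 + norm x) * exp (- a * (norm x)\<^sup>2)) \<le> norm (D x)" by simp
    qed
  qed
qed



lemma lborel_translate:
  fixes G :: "'a::euclidean_space \<Rightarrow> real" and c :: 'a
  assumes G: "integrable lborel G"
  shows "integrable lborel (\<lambda>x. G (x + c))" "(\<integral>x. G (x + c) \<partial>lborel) = integral\<^sup>L lborel G"
proof -
  have [measurable]: "G \<in> borel_measurable borel" using borel_measurable_integrable[OF G] by simp
  have "integrable (distr lborel borel ((+) c)) G" using G by (simp add: lborel_distr_plus)
  then show "integrable lborel (\<lambda>x. G (x + c))"
    by (subst (asm) integrable_distr_eq) (auto simp: add.commute)
  have "integral\<^sup>L lborel G = integral\<^sup>L (distr lborel borel ((+) c)) G" by (simp add: lborel_distr_plus)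
  also have "\<dots> = (\<integral>x. G (c + x) \<partial>lborel)" by (rule integral_distr) auto
  finally show "(\<integral>x. G (x + c) \<partial>lborel) = integral\<^sup>L lborel G" by (simp add: add.commute)
qed

lemma ibp_translate:
  fixes F G :: "'a::euclidean_space \<Rightarrow> real" and u :: 'a
  assumes F_int: "integrable lborel F"
    and G_int: "integrable lborel G"
    and G_cont: "continuous_on UNIV G"
    and deriv: "\<And>x s. ((\<lambda>s. F (x + s *\<^sub>R u)) has_real_derivative G (x + s *\<^sub>R u)) (at s)"
  shows "integral\<^sup>L lborel G = 0"
proof -
  define f where "f s x = indicator {0..1::real} s * G (x + s *\<^sub>R u)" for s x
  have Gm[measurable]: "G \<in> borel_measurable borel"
    using G_cont by (simp add: borel_measurable_continuous_onI)
  have fm: "case_prod f \<in> borel_measurable (lborel \<Otimes>\<^sub>M lborel)"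
    unfolding f_def by measurable
  have inner: "(\<integral>x. f s x \<partial>lborel) = indicator {0..1} s * integral\<^sup>L lborel G" for s
    unfolding f_def using lborel_translate(2)[OF G_int, of "s *\<^sub>R u"] by simp
  have inner_abs: "(\<integral>x. norm (f s x) \<partial>lborel) = indicator {0..1} s * (\<integral>x. norm (G x) \<partial>lborel)" for s
    unfolding f_def using lborel_translate(2)[of "\<lambda>x. norm (G x)" "s *\<^sub>R u"] G_int
    by (simp add: abs_mult)
  have ind_int: "integrable lborel (\<lambda>s::real. indicator {0..1} s * C)" for C :: real
    by (intro integrable_mult_left) (simp add: integrable_indicator_iff)
  have int_prod: "integrable (lborel \<Otimes>\<^sub>M lborel) (case_prod f)"
  proof (rule lborel_pair.Fubini_integrable[OF fm])
    show "integrable lborel (\<lambda>s. \<integral>x. norm (case_prod f (s, x)) \<partial>lborel)"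
      using inner_abs ind_int by simp
    show "AE s in lborel. integrable lborel (\<lambda>x. case_prod f (s, x))"
      unfolding f_def using lborel_translate(1)[OF G_int] by simp
  qed
  have ftc: "(\<integral>s. f s x \<partial>lborel) = F (x + u) - F x" for x
  proof -
    have "(\<integral>s. f s x \<partial>lborel) = (\<integral>s. indicator {0..1} s *\<^sub>R G (x + s *\<^sub>R u) \<partial>lborel)"
      unfolding f_def by simp
    also have "\<dots> = F (x + 1 *\<^sub>R u) - F (x + 0 *\<^sub>R u)"
    proof (rule integral_FTC_atLeastAtMost)
      show "((\<lambda>s. F (x + s *\<^sub>R u)) has_vector_derivative G (x + s *\<^sub>R u)) (at s within {0..1})" for s
        using deriv[of x s] by (simp add: has_real_derivative_iff_has_vector_derivative[symmetric] has_field_derivative_at_within)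
      show "continuous_on {0..1} (\<lambda>s. G (x + s *\<^sub>R u))"
        by (rule continuous_on_compose2[OF G_cont]) (auto intro!: continuous_intros)
    qed simp
    finally show ?thesis by simp
  qed
  have "(\<integral>x. (\<integral>s. f s x \<partial>lborel) \<partial>lborel) = (\<integral>s. (\<integral>x. f s x \<partial>lborel) \<partial>lborel)"
    by (rule lborel_pair.Fubini_integral[OF int_prod])
  also have "\<dots> = (\<integral>s. indicator {0..1::real} s * integral\<^sup>L lborel G \<partial>lborel)"
    using inner by simp
  also have "\<dots> = integral\<^sup>L lborel G"
    by simp
  finally have "integral\<^sup>L lborel G = (\<integral>x. F (x + u) - F x \<partial>lborel)"
    using ftc by simp
  also have "\<dots> = (\<integral>x. F (x + u) \<partial>lborel) - integral\<^sup>L lborel F"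
    using lborel_translate(1)[OF F_int] F_int by (rule Bochner_Integration.integral_diff)
  also have "\<dots> = 0" using lborel_translate(2)[OF F_int] by simp
  finally show ?thesis .
qed



lemma sigmoid_chain:
  assumes "(g has_real_derivative g') (at x)"
  shows "((\<lambda>x. sigmoid (g x)) has_real_derivative deriv sigmoid (g x) * g') (at x)"
  using DERIV_chain2[OF sigmoid_deriv assms] deriv_sigmoid by simp

lemma deriv_poly_form:
  fixes a c A B D K :: real
  shows "((\<lambda>s. sigmoid (a + s * c) * (K * exp (- (A + 2 * s * B + s\<^sup>2 * D) / 2))) has_real_derivative
     (deriv sigmoid (a + s * c) * c - sigmoid (a + s * c) * (B + s * D)) * (K * exp (- (A + 2 * s * B + s\<^sup>2 * D) / 2))) (at s)"
proof -
  have h1: "((\<lambda>s. a + s * c) has_real_derivative c) (at s)"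
    by (auto intro!: derivative_eq_intros)
  have h2: "((\<lambda>s. K * exp (- (A + 2 * s * B + s\<^sup>2 * D) / 2)) has_real_derivative
      (K * exp (- (A + 2 * s * B + s\<^sup>2 * D) / 2)) * (- (B + s * D))) (at s)"
    by (rule derivative_eq_intros refl | simp)+
  show ?thesis
    using DERIV_mult[OF sigmoid_chain[OF h1] h2] by (simp add: algebra_simps)
qed



definition gK :: "real^'n^'n \<Rightarrow> real" where
  "gK S = 1 / sqrt ((2 * pi) ^ CARD('n) * det S)"

lemma gK_pos: "pos_def_mat S \<Longrightarrow> gK S > 0"
  unfolding gK_def using det_pd_pos[of S] by simp

lemma gauss_pdf_alt: "gauss_pdf S x = gK S * exp (- (x \<bullet> (matrix_inv S *v x)) / 2)"
  unfolding gauss_pdf_def gK_def by simp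

lemma gauss_pos: "pos_def_mat S \<Longrightarrow> gauss_pdf S x > 0"
  unfolding gauss_pdf_alt using gK_pos[of S] by simp

lemma gauss_cont: "continuous_on UNIV (gauss_pdf (S::real^'n^'n))"
  unfolding gauss_pdf_alt[abs_def]
  by (intro continuous_intros linear_continuous_on matrix_vector_mul_linear) auto

lemma gauss_meas[measurable]: "gauss_pdf (S::real^'n^'n) \<in> borel_measurable borel"
  by (rule borel_measurable_continuous_onI[OF gauss_cont])

lemma gauss_int:
  assumes pd: "pos_def_mat (S::real^'n^'n)"
  shows "integrable lborel (\<lambda>x. (1 + norm x) * gauss_pdf S x)"
proof -
  obtain l where l: "l > 0" "\<And>x. x \<bullet> (matrix_inv S *v x) \<ge> l * (norm x)^2"
    using quad_lower[of "matrix_inv S"] pd_inv_pd[OF pd] by blast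
  have "integrable lborel (\<lambda>x::real^'n. gK S * ((1 + norm x) * exp (- (l/2) * (norm x)\<^sup>2)))"
    by (intro integrable_mult_right integrable_gauss_n) (simp add: l)
  then show ?thesis
  proof (rule Bochner_Integration.integrable_bound)
    show "(\<lambda>x. (1 + norm x) * gauss_pdf S x) \<in> borel_measurable lborel" by measurable
    show "AE x in lborel. norm ((1 + norm x) * gauss_pdf S x) \<le> norm (gK S * ((1 + norm x) * exp (- (l/2) * (norm x)\<^sup>2)))"
    proof (rule AE_I2)
      fix x :: "real^'n"
      have "exp (- (x \<bullet> (matrix_inv S *v x)) / 2) \<le> exp (- (l/2) * (norm x)\<^sup>2)"
        using l(2)[of x] by simp
      then have "(1 + norm x) * gauss_pdf S x \<le> gK S * ((1 + norm x) * exp (- (l/2) * (norm x)\<^sup>2))"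
        unfolding gauss_pdf_alt using gK_pos[OF pd]
        by (simp add: mult_left_mono mult.left_commute)
      moreover have "(1 + norm x) * gauss_pdf S x \<ge> 0" using gauss_pos[OF pd, of x] by simp
      ultimately show "norm ((1 + norm x) * gauss_pdf S x) \<le> norm (gK S * ((1 + norm x) * exp (- (l/2) * (norm x)\<^sup>2)))"
        by simp
    qed
  qed
qed

lemma gauss_dom:
  assumes pd: "pos_def_mat (S::real^'n^'n)"
    and fm: "f \<in> borel_measurable borel"
    and fb: "\<And>x. \<bar>f x\<bar> \<le> C * (1 + norm x)"
  shows "integrable lborel (\<lambda>x. gauss_pdf S x * f x)"
proof -
  have "integrable lborel (\<lambda>x. C * ((1 + norm x) * gauss_pdf S x))"
    using gauss_int[OF pd] by simp
  then show ?thesis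
  proof (rule Bochner_Integration.integrable_bound)
    show "(\<lambda>x. gauss_pdf S x * f x) \<in> borel_measurable lborel" using fm by measurable
    show "AE x in lborel. norm (gauss_pdf S x * f x) \<le> norm (C * ((1 + norm x) * gauss_pdf S x))"
    proof (rule AE_I2)
      fix x
      have p: "gauss_pdf S x > 0" by (rule gauss_pos[OF pd])
      have "\<bar>gauss_pdf S x * f x\<bar> = gauss_pdf S x * \<bar>f x\<bar>" using p by (simp add: abs_mult)
      also have "\<dots> \<le> gauss_pdf S x * (C * (1 + norm x))" using fb[of x] p by (simp add: mult_left_mono)
      also have "\<dots> \<le> \<bar>C * ((1 + norm x) * gauss_pdf S x)\<bar>" by (simp add: algebra_simps)
      finally show "norm (gauss_pdf S x * f x) \<le> norm (C * ((1 + norm x) * gauss_pdf S x))" by simp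
    qed
  qed
qed



lemma sigmoid_meas[measurable]: "sigmoid \<in> borel_measurable borel"
  by (rule borel_measurable_continuous_onI[OF continuous_sigmoid])

lemma dsigmoid_meas[measurable]: "deriv sigmoid \<in> borel_measurable borel"
  by (rule borel_measurable_continuous_onI[OF continuous_deriv_sigmoid])

lemma abs_inner_le: "\<bar>v \<bullet> x\<bar> \<le> norm v * (1 + norm (x::'a::real_inner))"
proof -
  have "\<bar>v \<bullet> x\<bar> \<le> norm v * norm x" by (rule Cauchy_Schwarz_ineq2)
  also have "\<dots> \<le> norm v * (1 + norm x)" by (simp add: mult_left_mono)
  finally show ?thesis .
qed

lemma stein:
  assumes pd: "pos_def_mat (S::real^'n^'n)"
  shows "(\<integral>x. gauss_pdf S x * (sigmoid (x \<bullet> \<beta>) * (x \<bullet> v)) \<partial>lborel)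
       = ((S *v v) \<bullet> \<beta>) * (\<integral>x. gauss_pdf S x * deriv sigmoid (x \<bullet> \<beta>) \<partial>lborel)"
proof -
  define P where "P = matrix_inv S"
  define u where "u = S *v v"
  have Pu: "P *v u = v" unfolding P_def u_def
    by (simp add: matrix_vector_mul_assoc pd_inv(2)[OF pd])
  have sym: "transpose P = P" unfolding P_def by (rule pd_inv_sym[OF pd])
  have uPx: "u \<bullet> (P *v x) = v \<bullet> x" for x
    using inner_mat_sym[OF sym, of u x] Pu by simp
  have xPu: "x \<bullet> (P *v u) = u \<bullet> (P *v x)" for x
    using inner_mat_sym[OF sym, of x u] by (simp add: inner_commute)
  define F where "F x = sigmoid (x \<bullet> \<beta>) * gauss_pdf S x" for x
  define G where "G x = (deriv sigmoid (x \<bullet> \<beta>) * (u \<bullet> \<beta>) - sigmoid (x \<bullet> \<beta>) * (v \<bullet> x)) * gauss_pdf S x" for x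
  have i1: "integrable lborel (\<lambda>x. gauss_pdf S x * deriv sigmoid (x \<bullet> \<beta>))"
  proof (rule gauss_dom[OF pd, where C=1])
    show "(\<lambda>x. deriv sigmoid (x \<bullet> \<beta>)) \<in> borel_measurable borel" by measurable
    fix x :: "real^'n"
    show "\<bar>deriv sigmoid (x \<bullet> \<beta>)\<bar> \<le> 1 * (1 + norm x)"
      using deriv_sigmoid_pos[of "x \<bullet> \<beta>"] deriv_sigmoid_le1[of "x \<bullet> \<beta>"] norm_ge_zero[of x] by (smt (verit))
  qed
  have i2: "integrable lborel (\<lambda>x. gauss_pdf S x * (sigmoid (x \<bullet> \<beta>) * (x \<bullet> v)))"
  proof (rule gauss_dom[OF pd, where C="norm v"])
    show "(\<lambda>x. sigmoid (x \<bullet> \<beta>) * (x \<bullet> v)) \<in> borel_measurable borel" by measurable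
    fix x :: "real^'n"
    have "\<bar>sigmoid (x \<bullet> \<beta>) * (x \<bullet> v)\<bar> \<le> 1 * \<bar>x \<bullet> v\<bar>"
      unfolding abs_mult using sigmoid_pos[of "x \<bullet> \<beta>"] sigmoid_less1[of "x \<bullet> \<beta>"]
      by (intro mult_right_mono) auto
    also have "\<dots> \<le> norm v * (1 + norm x)" using abs_inner_le[of v x] by (simp add: inner_commute)
    finally show "\<bar>sigmoid (x \<bullet> \<beta>) * (x \<bullet> v)\<bar> \<le> norm v * (1 + norm x)" .
  qed
  have F_int: "integrable lborel F"
  proof -
    have "integrable lborel (\<lambda>x. gauss_pdf S x * sigmoid (x \<bullet> \<beta>))"
    proof (rule gauss_dom[OF pd, where C=1])
      show "(\<lambda>x. sigmoid (x \<bullet> \<beta>)) \<in> borel_measurable borel" by measurable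
      fix x :: "real^'n"
      show "\<bar>sigmoid (x \<bullet> \<beta>)\<bar> \<le> 1 * (1 + norm x)"
        using sigmoid_pos[of "x \<bullet> \<beta>"] sigmoid_less1[of "x \<bullet> \<beta>"] norm_ge_zero[of x] by (smt (verit))
    qed
    then show ?thesis unfolding F_def by (simp add: mult.commute)
  qed
  have G_eq: "G = (\<lambda>x. (u \<bullet> \<beta>) * (gauss_pdf S x * deriv sigmoid (x \<bullet> \<beta>)) - gauss_pdf S x * (sigmoid (x \<bullet> \<beta>) * (x \<bullet> v)))"
    unfolding G_def by (auto simp: algebra_simps inner_commute)
  have G_int: "integrable lborel G"
    unfolding G_eq using i1 i2 by simp
  have G_cont: "continuous_on UNIV G"
    unfolding G_def
    by (intro continuous_intros continuous_on_compose2[OF continuous_deriv_sigmoid]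
          continuous_on_compose2[OF continuous_sigmoid] continuous_on_compose2[OF gauss_cont]) auto
  have deriv: "((\<lambda>s. F (x + s *\<^sub>R u)) has_real_derivative G (x + s *\<^sub>R u)) (at s)" for x s
  proof -
    define a where "a = x \<bullet> \<beta>"
    define c where "c = u \<bullet> \<beta>"
    define A where "A = x \<bullet> (P *v x)"
    define B where "B = u \<bullet> (P *v x)"
    define D where "D = u \<bullet> (P *v u)"
    have e1: "(x + t *\<^sub>R u) \<bullet> \<beta> = a + t * c" for t
      unfolding a_def c_def by (simp add: inner_add_left)
    have e2: "(x + t *\<^sub>R u) \<bullet> (P *v (x + t *\<^sub>R u)) = A + 2 * t * B + t\<^sup>2 * D" for t
      unfolding A_def B_def D_def using xPu[of x]
      by (simp add: matrix_vector_right_distrib matrix_vector_mult_scaleR inner_add_left inner_add_right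
            algebra_simps power2_eq_square)
    have e3: "v \<bullet> (x + t *\<^sub>R u) = B + t * D" for t
      unfolding B_def D_def using uPx[of x] uPx[of u] by (simp add: inner_add_right inner_commute)
    have Fe: "(\<lambda>s. F (x + s *\<^sub>R u)) = (\<lambda>s. sigmoid (a + s * c) * (gK S * exp (- (A + 2 * s * B + s\<^sup>2 * D) / 2)))"
      unfolding F_def gauss_pdf_alt P_def[symmetric] e1 e2 by simp
    have Ge: "G (x + s *\<^sub>R u) = (deriv sigmoid (a + s * c) * c - sigmoid (a + s * c) * (B + s * D)) * (gK S * exp (- (A + 2 * s * B + s\<^sup>2 * D) / 2))"
      unfolding G_def gauss_pdf_alt P_def[symmetric] e1 e2 e3 c_def by simp
    show ?thesis unfolding Fe Ge by (rule deriv_poly_form)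
  qed
  have "integral\<^sup>L lborel G = 0"
    by (rule ibp_translate[OF F_int G_int G_cont deriv])
  moreover have "integral\<^sup>L lborel G = (u \<bullet> \<beta>) * (\<integral>x. gauss_pdf S x * deriv sigmoid (x \<bullet> \<beta>) \<partial>lborel)
        - (\<integral>x. gauss_pdf S x * (sigmoid (x \<bullet> \<beta>) * (x \<bullet> v)) \<partial>lborel)"
    unfolding G_eq using i1 i2 by simp
  ultimately show ?thesis unfolding u_def by simp
qed



lemma int_dsig:
  assumes pd: "pos_def_mat (S::real^'n^'n)"
  shows "integrable lborel (\<lambda>x. gauss_pdf S x * deriv sigmoid (x \<bullet> \<beta>))"
proof (rule gauss_dom[OF pd, where C=1])
  show "(\<lambda>x. deriv sigmoid (x \<bullet> \<beta>)) \<in> borel_measurable borel" by measurable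
  fix x :: "real^'n"
  show "\<bar>deriv sigmoid (x \<bullet> \<beta>)\<bar> \<le> 1 * (1 + norm x)"
    using deriv_sigmoid_pos[of "x \<bullet> \<beta>"] deriv_sigmoid_le1[of "x \<bullet> \<beta>"] norm_ge_zero[of x] by (smt (verit))
qed

lemma int_sigx:
  assumes pd: "pos_def_mat (S::real^'n^'n)"
  shows "integrable lborel (\<lambda>x. gauss_pdf S x * (sigmoid (x \<bullet> \<beta>) * (x \<bullet> v)))"
proof (rule gauss_dom[OF pd, where C="norm v"])
  show "(\<lambda>x. sigmoid (x \<bullet> \<beta>) * (x \<bullet> v)) \<in> borel_measurable borel" by measurable
  fix x :: "real^'n"
  have "\<bar>sigmoid (x \<bullet> \<beta>) * (x \<bullet> v)\<bar> \<le> 1 * \<bar>x \<bullet> v\<bar>"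
    unfolding abs_mult using sigmoid_pos[of "x \<bullet> \<beta>"] sigmoid_less1[of "x \<bullet> \<beta>"]
    by (intro mult_right_mono) auto
  also have "\<dots> \<le> norm v * (1 + norm x)" using abs_inner_le[of v x] by (simp add: inner_commute)
  finally show "\<bar>sigmoid (x \<bullet> \<beta>) * (x \<bullet> v)\<bar> \<le> norm v * (1 + norm x)" .
qed

lemma int_gauss0:
  assumes pd: "pos_def_mat (S::real^'n^'n)"
  shows "integrable lborel (gauss_pdf S)"
  using gauss_dom[OF pd, of "\<lambda>_. 1" 1] by simp

lemma w_pos:
  assumes pd: "pos_def_mat (S::real^'n^'n)"
  shows "(\<integral>x. gauss_pdf S x * deriv sigmoid (x \<bullet> \<beta>) \<partial>lborel) > 0"
proof -
  let ?f = "\<lambda>x. gauss_pdf S x * deriv sigmoid (x \<bullet> \<beta>)"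
  have pos: "?f x > 0" for x using gauss_pos[OF pd, of x] deriv_sigmoid_pos[of "x \<bullet> \<beta>"] by simp
  have "integral\<^sup>L lborel ?f \<ge> 0" using pos by (simp add: less_imp_le)
  moreover have "integral\<^sup>L lborel ?f \<noteq> 0"
  proof
    assume "integral\<^sup>L lborel ?f = 0"
    then have "AE x in lborel. ?f x = 0"
      using integral_nonneg_eq_0_iff_AE[OF int_dsig[OF pd, of \<beta>]] pos by (simp add: less_imp_le)
    moreover have "AE x in lborel. ?f x = 0 \<longrightarrow> False" using pos by (intro AE_I2) (metis less_irrefl)
    ultimately have "AE x in (lborel :: (real^'n) measure). False" by (rule AE_mp)
    then have "ae_filter (lborel :: (real^'n) measure) = bot" using trivial_limit_def by blast
    then have "emeasure (lborel :: (real^'n) measure) (space lborel) = 0" using ae_filter_eq_bot_iff by blast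
    then show False by simp
  qed
  ultimately show ?thesis by simp
qed



theorem proposition1:
  fixes \<Sigma> :: "real ^'n ^'n"
    and M\<^sub>\<beta> :: "(real ^'n) measure"
    and b :: "real ^'n"
  assumes pd: "pos_def_mat \<Sigma>"
    and prob: "prob_space M\<^sub>\<beta>"
    and sets_M: "sets M\<^sub>\<beta> = sets borel"
    and int_beta: "integrable M\<^sub>\<beta> (\<lambda>\<beta>. norm \<beta>)"
    and moment: "(\<integral>x. sigmoid (x \<bullet> b) *\<^sub>R x \<partial>gaussian_vec \<Sigma>)
               = (\<integral>x. (\<integral>\<beta>. sigmoid (x \<bullet> \<beta>) \<partial>M\<^sub>\<beta>) *\<^sub>R x \<partial>gaussian_vec \<Sigma>)"
  shows "(let c = 1 / (\<integral>x. deriv sigmoid (x \<bullet> b) \<partial>gaussian_vec \<Sigma>)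
          in c > 0 \<and>
             b = c *\<^sub>R (\<integral>\<beta>. (\<integral>x. deriv sigmoid (x \<bullet> \<beta>) \<partial>gaussian_vec \<Sigma>) *\<^sub>R \<beta> \<partial>M\<^sub>\<beta>))"
proof -
  interpret M: prob_space M\<^sub>\<beta> by (rule prob)
  interpret MP: pair_sigma_finite M\<^sub>\<beta> "lborel :: (real^'n) measure"
    by (rule pair_sigma_finite.intro) (simp_all add: M.sigma_finite_measure_axioms sigma_finite_lborel)
  let ?p = "gauss_pdf \<Sigma>"
  have sM: "sets M\<^sub>\<beta> = sets (lborel :: (real^'n) measure)" using sets_M by simp
  have measM: "measurable M\<^sub>\<beta> N = measurable lborel N" for N :: "'b measure"
    by (rule measurable_cong_sets[OF sM refl])
  have measP: "measurable (M\<^sub>\<beta> \<Otimes>\<^sub>M lborel) N = measurable ((lborel :: (real^'n) measure) \<Otimes>\<^sub>M (lborel :: (real^'n) measure)) N"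
    for N :: "'b measure"
    by (rule measurable_cong_sets[OF sets_pair_measure_cong[OF sM refl] refl])
  have measP2: "measurable (lborel \<Otimes>\<^sub>M M\<^sub>\<beta>) N = measurable ((lborel :: (real^'n) measure) \<Otimes>\<^sub>M (lborel :: (real^'n) measure)) N"
    for N :: "'b measure"
    by (rule measurable_cong_sets[OF sets_pair_measure_cong[OF refl sM] refl])
  have dens_int: "integral\<^sup>L (gaussian_vec \<Sigma>) f = (\<integral>x. ?p x *\<^sub>R f x \<partial>lborel)"
    if "f \<in> borel_measurable lborel" for f :: "real^'n \<Rightarrow> 'c::{banach, second_countable_topology}"
    unfolding gaussian_vec_def by (rule integral_density[OF that]) (auto simp: gauss_pos[OF pd] less_imp_le)
  define w where "w \<beta> = (\<integral>x. ?p x * deriv sigmoid (x \<bullet> \<beta>) \<partial>lborel)" for \<beta>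
  have w_eq: "(\<integral>x. deriv sigmoid (x \<bullet> \<beta>) \<partial>gaussian_vec \<Sigma>) = w \<beta>" for \<beta>
    unfolding w_def by (subst dens_int) auto
  have w_meas: "w \<in> borel_measurable M\<^sub>\<beta>"
    unfolding measM w_def by measurable
  define Cp where "Cp = integral\<^sup>L lborel ?p"
  have w_bound: "\<bar>w \<beta>\<bar> \<le> Cp" for \<beta>
  proof -
    have "w \<beta> \<le> Cp" unfolding w_def Cp_def
      using int_dsig[OF pd, of \<beta>] int_gauss0[OF pd] gauss_pos[OF pd] deriv_sigmoid_le1
      by (intro integral_mono) (auto simp: mult_left_le less_imp_le)
    then show ?thesis using w_pos[OF pd, of \<beta>] unfolding w_def by simp
  qed
  have Cp_nn: "Cp \<ge> 0" using w_bound[of 0] by simp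
  define m where "m = (\<integral>\<beta>. w \<beta> *\<^sub>R \<beta> \<partial>M\<^sub>\<beta>)"
  have m_int: "integrable M\<^sub>\<beta> (\<lambda>\<beta>. w \<beta> *\<^sub>R \<beta>)"
  proof (rule Bochner_Integration.integrable_bound)
    show "integrable M\<^sub>\<beta> (\<lambda>\<beta>. Cp * norm \<beta>)" using int_beta by simp
    show "(\<lambda>\<beta>. w \<beta> *\<^sub>R \<beta>) \<in> borel_measurable M\<^sub>\<beta>"
      using w_meas by (simp add: measM)
    show "AE \<beta> in M\<^sub>\<beta>. norm (w \<beta> *\<^sub>R \<beta>) \<le> norm (Cp * norm \<beta>)"
      using w_bound Cp_nn by (intro AE_I2) (simp add: abs_mult mult_right_mono)
  qed
  have key: "((\<Sigma> *v v) \<bullet> b) * w b = (\<Sigma> *v v) \<bullet> m" for v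
  proof -
    let ?u = "\<Sigma> *v v"
    have iL: "integrable lborel (\<lambda>x. ?p x *\<^sub>R (sigmoid (x \<bullet> b) *\<^sub>R x))"
    proof (rule Bochner_Integration.integrable_bound[OF gauss_int[OF pd]])
      show "(\<lambda>x. ?p x *\<^sub>R (sigmoid (x \<bullet> b) *\<^sub>R x)) \<in> borel_measurable lborel" by measurable
      show "AE x in lborel. norm (?p x *\<^sub>R (sigmoid (x \<bullet> b) *\<^sub>R x)) \<le> norm ((1 + norm x) * ?p x)"
      proof (rule AE_I2)
        fix x :: "real^'n"
        have p: "?p x > 0" by (rule gauss_pos[OF pd])
        have s: "0 < sigmoid (x \<bullet> b)" "sigmoid (x \<bullet> b) < 1" by (rule sigmoid_pos, rule sigmoid_less1)
        have "norm (?p x *\<^sub>R (sigmoid (x \<bullet> b) *\<^sub>R x)) = ?p x * (sigmoid (x \<bullet> b) * norm x)"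
          using p s by simp
        also have "\<dots> \<le> ?p x * (1 * (1 + norm x))"
          using p s by (intro mult_left_mono mult_mono) auto
        finally show "norm (?p x *\<^sub>R (sigmoid (x \<bullet> b) *\<^sub>R x)) \<le> norm ((1 + norm x) * ?p x)"
          using p by (simp add: mult.commute)
      qed
    qed
    have L: "(\<integral>x. sigmoid (x \<bullet> b) *\<^sub>R x \<partial>gaussian_vec \<Sigma>) \<bullet> v = (?u \<bullet> b) * w b"
    proof -
      have "(\<integral>x. sigmoid (x \<bullet> b) *\<^sub>R x \<partial>gaussian_vec \<Sigma>) = (\<integral>x. ?p x *\<^sub>R (sigmoid (x \<bullet> b) *\<^sub>R x) \<partial>lborel)"
        by (rule dens_int) measurable
      also have "\<dots> \<bullet> v = (\<integral>x. (?p x *\<^sub>R (sigmoid (x \<bullet> b) *\<^sub>R x)) \<bullet> v \<partial>lborel)"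
        by (rule integral_inner_left[symmetric]) (rule iL)
      also have "\<dots> = (\<integral>x. ?p x * (sigmoid (x \<bullet> b) * (x \<bullet> v)) \<partial>lborel)"
        by (simp add: mult.assoc)
      also have "\<dots> = (?u \<bullet> b) * w b"
        unfolding w_def by (rule stein[OF pd])
      finally show ?thesis .
    qed
    define I where "I x = (\<integral>\<beta>. sigmoid (x \<bullet> \<beta>) \<partial>M\<^sub>\<beta>)" for x
    have I_meas: "I \<in> borel_measurable lborel"
      unfolding I_def by (rule M.borel_measurable_lebesgue_integral) (simp add: measP2)
    have I_bound: "0 \<le> I x \<and> I x \<le> 1" for x
    proof -
      have ii: "integrable M\<^sub>\<beta> (\<lambda>\<beta>. sigmoid (x \<bullet> \<beta>))"
      proof (rule M.integrable_const_bound[where B=1])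
        show "AE \<beta> in M\<^sub>\<beta>. norm (sigmoid (x \<bullet> \<beta>)) \<le> 1"
          using sigmoid_pos sigmoid_less1 by (intro AE_I2) (simp add: less_imp_le)
        show "(\<lambda>\<beta>. sigmoid (x \<bullet> \<beta>)) \<in> borel_measurable M\<^sub>\<beta>" unfolding measM by measurable
      qed
      have "I x \<le> (\<integral>\<beta>. 1 \<partial>M\<^sub>\<beta>)" unfolding I_def
        using ii sigmoid_less1 by (intro integral_mono) (auto simp: less_imp_le)
      moreover have "0 \<le> I x" unfolding I_def using sigmoid_pos by (simp add: less_imp_le)
      ultimately show ?thesis by (simp add: M.prob_space)
    qed
    have iR: "integrable lborel (\<lambda>x. ?p x *\<^sub>R (I x *\<^sub>R x))"
    proof (rule Bochner_Integration.integrable_bound[OF gauss_int[OF pd]])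
      show "(\<lambda>x. ?p x *\<^sub>R (I x *\<^sub>R x)) \<in> borel_measurable lborel" using I_meas by measurable
      show "AE x in lborel. norm (?p x *\<^sub>R (I x *\<^sub>R x)) \<le> norm ((1 + norm x) * ?p x)"
      proof (rule AE_I2)
        fix x :: "real^'n"
        have p: "?p x > 0" by (rule gauss_pos[OF pd])
        have s: "0 \<le> I x" "I x \<le> 1" using I_bound[of x] by auto
        have "norm (?p x *\<^sub>R (I x *\<^sub>R x)) = ?p x * (I x * norm x)"
          using p s by simp
        also have "\<dots> \<le> ?p x * (1 * (1 + norm x))"
          using p s by (intro mult_left_mono mult_mono) auto
        finally show "norm (?p x *\<^sub>R (I x *\<^sub>R x)) \<le> norm ((1 + norm x) * ?p x)"
          using p by (simp add: mult.commute)
      qed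
    qed
    define f where "f \<beta> x = ?p x * (sigmoid (x \<bullet> \<beta>) * (x \<bullet> v))" for \<beta> x
    have f_int: "integrable (M\<^sub>\<beta> \<Otimes>\<^sub>M lborel) (case_prod f)"
    proof (rule MP.Fubini_integrable)
      show "case_prod f \<in> borel_measurable (M\<^sub>\<beta> \<Otimes>\<^sub>M lborel)"
        unfolding measP f_def by measurable
      define B where "B = (\<integral>x. ?p x * (norm v * (1 + norm x)) \<partial>lborel)"
      have iB: "integrable lborel (\<lambda>x. ?p x * (norm v * (1 + norm x)))"
        using gauss_int[OF pd] by (simp add: mult.commute mult.left_commute)
      show "integrable M\<^sub>\<beta> (\<lambda>\<beta>. \<integral>x. norm (case_prod f (\<beta>, x)) \<partial>lborel)"
      proof (rule M.integrable_const_bound[where B=B])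
        show "(\<lambda>\<beta>. \<integral>x. norm (case_prod f (\<beta>, x)) \<partial>lborel) \<in> borel_measurable M\<^sub>\<beta>"
          unfolding measM f_def by measurable
        show "AE \<beta> in M\<^sub>\<beta>. norm (\<integral>x. norm (case_prod f (\<beta>, x)) \<partial>lborel) \<le> B"
        proof (rule AE_I2)
          fix \<beta>
          have "(\<integral>x. norm (f \<beta> x) \<partial>lborel) \<le> B" unfolding B_def
          proof (rule integral_mono)
            show "integrable lborel (\<lambda>x. norm (f \<beta> x))" unfolding f_def using int_sigx[OF pd] by (rule integrable_norm)
            show "integrable lborel (\<lambda>x. ?p x * (norm v * (1 + norm x)))" by (rule iB)
            fix x :: "real^'n"
            have p: "?p x > 0" by (rule gauss_pos[OF pd])
            have "\<bar>sigmoid (x \<bullet> \<beta>) * (x \<bullet> v)\<bar> \<le> 1 * \<bar>x \<bullet> v\<bar>"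
              unfolding abs_mult using sigmoid_pos[of "x \<bullet> \<beta>"] sigmoid_less1[of "x \<bullet> \<beta>"]
              by (intro mult_right_mono) auto
            also have "\<dots> \<le> norm v * (1 + norm x)" using abs_inner_le[of v x] by (simp add: inner_commute)
            finally show "norm (f \<beta> x) \<le> ?p x * (norm v * (1 + norm x))"
              unfolding f_def using p by (simp add: abs_mult mult_left_mono)
          qed
          moreover have "0 \<le> (\<integral>x. norm (f \<beta> x) \<partial>lborel)" by simp
          ultimately show "norm (\<integral>x. norm (case_prod f (\<beta>, x)) \<partial>lborel) \<le> B" by simp
        qed
      qed
      show "AE \<beta> in M\<^sub>\<beta>. integrable lborel (\<lambda>x. case_prod f (\<beta>, x))"
        unfolding f_def using int_sigx[OF pd] by simp
    qed
    have R: "(\<integral>x. I x *\<^sub>R x \<partial>gaussian_vec \<Sigma>) \<bullet> v = ?u \<bullet> m"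
    proof -
      have "(\<integral>x. I x *\<^sub>R x \<partial>gaussian_vec \<Sigma>) = (\<integral>x. ?p x *\<^sub>R (I x *\<^sub>R x) \<partial>lborel)"
        by (rule dens_int) (use I_meas in measurable)
      also have "\<dots> \<bullet> v = (\<integral>x. (?p x *\<^sub>R (I x *\<^sub>R x)) \<bullet> v \<partial>lborel)"
        by (rule integral_inner_left[symmetric]) (rule iR)
      also have "\<dots> = (\<integral>x. (\<integral>\<beta>. f \<beta> x \<partial>M\<^sub>\<beta>) \<partial>lborel)"
        unfolding f_def I_def by (simp add: mult.assoc)
      also have "\<dots> = (\<integral>\<beta>. (\<integral>x. f \<beta> x \<partial>lborel) \<partial>M\<^sub>\<beta>)"
        by (rule MP.Fubini_integral[OF f_int])
      also have "\<dots> = (\<integral>\<beta>. ?u \<bullet> (w \<beta> *\<^sub>R \<beta>) \<partial>M\<^sub>\<beta>)"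
      proof (intro Bochner_Integration.integral_cong refl)
        fix \<beta> :: "real^'n"
        have "(\<integral>x. f \<beta> x \<partial>lborel) = (?u \<bullet> \<beta>) * w \<beta>"
          unfolding f_def w_def by (rule stein[OF pd])
        then show "(\<integral>x. f \<beta> x \<partial>lborel) = ?u \<bullet> (w \<beta> *\<^sub>R \<beta>)" by simp
      qed
      also have "\<dots> = ?u \<bullet> m"
        unfolding m_def by (rule integral_inner_right) (rule m_int)
      finally show ?thesis .
    qed
    show ?thesis using L R moment unfolding I_def by simp
  qed
  define z where "z = w b *\<^sub>R b - m"
  have "(\<Sigma> *v v) \<bullet> z = 0" for v
    unfolding z_def using key[of v] by (simp add: inner_diff_right mult.commute)
  from this[of "matrix_inv \<Sigma> *v z"] have "z \<bullet> z = 0"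
    by (simp add: matrix_vector_mul_assoc pd_inv(1)[OF pd])
  then have eq: "w b *\<^sub>R b = m" unfolding z_def by simp
  have pos: "w b > 0" unfolding w_def by (rule w_pos[OF pd])
  have "b = (1 / w b) *\<^sub>R m" using pos by (simp add: eq[symmetric] scaleR_scaleR)
  then show ?thesis
    unfolding w_eq Let_def m_def[symmetric] using pos by simp
qed


end
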